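(* Let $I$ be a compact metric space, $\mu$ a non-negative finite Borel measure on $I$, $N\ge2$ and $N'\le N$ natural numbers, and $s:\mathcal{G}\to[0,\infty)$ a surplus function. Define $S:I^{N!}\to\mathbb{R}$ by $S(i_1,\dots,i_{N!})=\hat s([i_1,\dots,i_{N!}])$ and $\hat{\mathcal{U}}=\{u\in L^1(I,\mu):\sum_{k=1}^{N!}u(i_k)\ge(N-1)!\,S(i_1,\dots,i_{N!})\ \forall i_1,\dots,i_{N!}\in I\}$, $\mathcal{U}_n=\{u\in L^1(I,\mu):\sum_{k=1}^nu(i_k)\ge s([i_1,\dots,i_n])\ \forall i_1,\dots,i_n\in I\}$ for $N'\le n\le N$, and $\mathcal{U}=\{u\in L^1(I,\mu):\sum_{i\in G}u(i)\ge s(G)\ \forall G\in\mathcal{G}\}$. Then $\hat{\mathcal{U}}=\mathcal{U}=\bigcap_{n=N'}^N\mathcal{U}_n$.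
   Context: For $n\in\mathbb{N}$, $I^n/\sim_n$ is the quotient of $I^n$ by permutation of coordinates, classes written $[i_1,\dots,i_n]$; $\mathcal{G}_n=I^n/\sim_n$ (multisets of size $n$) and $\mathcal{G}=\bigcup_{n=N'}^N\mathcal{G}_n$; $s_n=s|_{\mathcal{G}_n}$. For $G=[i_1,\dots,i_n]$, $\sum_{i\in G}u(i)=\sum_{k=1}^nu(i_k)$. For $N'\le n\le N$, $K_n\subset I^{N!}/\sim_{N!}$ is the set of classes $[i_1,\dots,i_{N!}]$ such that for each $i\in I$, $|\{k:i_k=i\}|$ is divisible by $N!/n$; $P_n:K_n\to\mathcal{G}_n$ sends $[\underbrace{j_1,\dots,j_1}_{N!/n},\dots,\underbrace{j_n,\dots,j_n}_{N!/n}]$ to $[j_1,\dots,j_n]$. $\hat s_n=s_n\circ P_n$ on $K_n$ and $0$ off $K_n$; $\hat s=\max_{N'\le n\le N}\frac{N}{n}\hat s_n$. *)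

theory Defs
  imports "HOL-Analysis.Analysis" "HOL-Library.Multiset"
begin

text \<open>Multisets of size n with elements in I (the classes of I^n modulo permutations).\<close>
definition Gn :: "'a set \<Rightarrow> nat \<Rightarrow> 'a multiset set" where
  "Gn I n = {G. size G = n \<and> set_mset G \<subseteq> I}"

definition calG :: "'a set \<Rightarrow> nat \<Rightarrow> nat \<Rightarrow> 'a multiset set" where
  "calG I N' N = (\<Union>n\<in>{N'..N}. Gn I n)"

definition Kn :: "'a set \<Rightarrow> nat \<Rightarrow> nat \<Rightarrow> 'a multiset set" where
  "Kn I N n = {M. size M = fact N \<and> set_mset M \<subseteq> I \<and> (\<forall>i. (fact N div n) dvd count M i)}"

definition Pn :: "nat \<Rightarrow> nat \<Rightarrow> 'a multiset \<Rightarrow> 'a multiset" where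
  "Pn N n M = (THE G. repeat_mset (fact N div n) G = M)"

definition s_hat_n :: "'a set \<Rightarrow> ('a multiset \<Rightarrow> real) \<Rightarrow> nat \<Rightarrow> nat \<Rightarrow> 'a multiset \<Rightarrow> real" where
  "s_hat_n I s N n M = (if M \<in> Kn I N n then s (Pn N n M) else 0)"

definition s_hat :: "'a set \<Rightarrow> ('a multiset \<Rightarrow> real) \<Rightarrow> nat \<Rightarrow> nat \<Rightarrow> 'a multiset \<Rightarrow> real" where
  "s_hat I s N' N M = Max ((\<lambda>n. (real N / real n) * s_hat_n I s N n M) ` {N'..N})"

definition S_fun :: "'a set \<Rightarrow> ('a multiset \<Rightarrow> real) \<Rightarrow> nat \<Rightarrow> nat \<Rightarrow> (nat \<Rightarrow> 'a) \<Rightarrow> real" where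
  "S_fun I s N' N i = s_hat I s N' N (image_mset i (mset_set {..<fact N}))"

definition U_hat :: "'a measure \<Rightarrow> 'a set \<Rightarrow> ('a multiset \<Rightarrow> real) \<Rightarrow> nat \<Rightarrow> nat \<Rightarrow> ('a \<Rightarrow> real) set" where
  "U_hat M I s N' N = {u. integrable M u \<and>
     (\<forall>i. (\<forall>k<fact N. i k \<in> I) \<longrightarrow>
        (\<Sum>k<fact N. u (i k)) \<ge> real (fact (N - 1)) * S_fun I s N' N i)}"

definition U_n :: "'a measure \<Rightarrow> 'a set \<Rightarrow> ('a multiset \<Rightarrow> real) \<Rightarrow> nat \<Rightarrow> ('a \<Rightarrow> real) set" where
  "U_n M I s n = {u. integrable M u \<and>
     (\<forall>i. (\<forall>k<n. i k \<in> I) \<longrightarrow>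
        (\<Sum>k<n. u (i k)) \<ge> s (image_mset i (mset_set {..<n})))}"

definition U_all :: "'a measure \<Rightarrow> 'a set \<Rightarrow> ('a multiset \<Rightarrow> real) \<Rightarrow> nat \<Rightarrow> nat \<Rightarrow> ('a \<Rightarrow> real) set" where
  "U_all M I s N' N = {u. integrable M u \<and>
     (\<forall>G\<in>calG I N' N. (\<Sum>i\<in>#G. u i) \<ge> s G)}"

end

theory Submission
  imports Defs
begin


lemma enum_mset:
  "\<exists>i. image_mset i (mset_set {..<size G}) = G \<and> (\<forall>k<size G. i k \<in># G)"
proof -
  obtain xs where xs: "mset xs = G" using ex_mset by blast
  have "image_mset ((!) xs) (mset_set {..<length xs}) = mset xs"
    by (metis lessThan_atLeast0 map_nth mset_map mset_upt)
  moreover have "\<forall>k<length xs. xs ! k \<in># mset xs" by simp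
  ultimately show ?thesis using xs by (intro exI[of _ "(!) xs"]) auto
qed

lemma sum_enum: "(\<Sum>k<n. u (i k)) = (\<Sum>x\<in>#image_mset i (mset_set {..<n}). u x)"
  by (simp add: sum_unfold_sum_mset image_mset.compositionality comp_def)

lemma sum_mset_nonneg_real: "(\<And>x. x \<in># A \<Longrightarrow> 0 \<le> f x) \<Longrightarrow> 0 \<le> (\<Sum>x\<in>#A. (f x::real))"
  by (induction A) auto

lemma sum_repeat: "(\<Sum>x\<in>#repeat_mset k G. (u x::real)) = real k * (\<Sum>x\<in>#G. u x)"
  by (induction k) (auto simp: algebra_simps)

lemma set_repeat:
  assumes "k > 0" shows "set_mset (repeat_mset k G) = set_mset G"
proof (rule set_eqI)
  fix x
  have "x \<in># repeat_mset k G \<longleftrightarrow> count (repeat_mset k G) x > 0"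
    by (rule count_greater_zero_iff[symmetric])
  also have "\<dots> \<longleftrightarrow> count G x > 0" using assms by simp
  also have "\<dots> \<longleftrightarrow> x \<in># G" by (rule count_greater_zero_iff)
  finally show "x \<in># repeat_mset k G \<longleftrightarrow> x \<in># G" .
qed

lemma Pn_repeat: "fact N div n > 0 \<Longrightarrow> Pn N n (repeat_mset (fact N div n) G) = G"
  unfolding Pn_def by (rule the_equality) (auto simp: repeat_mset_cancel1)

lemma size_enum: "size (image_mset i (mset_set {..<n})) = n" by simp

lemma set_enum: "(\<forall>k<(n::nat). i k \<in> I) \<Longrightarrow> set_mset (image_mset i (mset_set {..<n})) \<subseteq> I"
  using finite_lessThan[of n] by (auto simp del: finite_lessThan)

lemma repeat_exists:
  assumes "K > 0" "\<forall>x. K dvd count M x"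
  shows "\<exists>G. repeat_mset K G = M"
proof -
  have fin: "finite {x. 0 < count M x div K}"
    by (rule finite_subset[of _ "set_mset M"]) (auto simp: div_greater_zero_iff intro: count_inI)
  show ?thesis
    by (rule exI[of _ "Abs_multiset (\<lambda>x. count M x div K)"], rule multiset_eqI)
       (use assms fin in \<open>simp add: count_Abs_multiset\<close>)
qed

lemma real_K:
  assumes "1 \<le> n" "n \<le> N"
  shows "real (fact N div n) = real (fact (N - 1)) * (real N / real n)"
    and "fact N div n > (0::nat)"
proof -
  have d: "n dvd fact N" using assms by (simp add: dvd_fact)
  have f: "(fact N::nat) = N * fact (N - 1)" using assms
    by (cases N) auto
  have "real (fact N div n) = real (fact N) / real n" using d by (simp add: real_of_nat_div)
  also have "\<dots> = real (fact (N - 1)) * (real N / real n)" using f by (simp add: of_nat_mult)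
  finally show "real (fact N div n) = real (fact (N - 1)) * (real N / real n)" .
  have "n \<le> (fact N::nat)" using assms fact_ge_self[of N] by linarith
  then show "fact N div n > (0::nat)" using assms by (simp add: div_greater_zero_iff)
qed


theorem lemma6:
  fixes I :: "'a::metric_space set" and M :: "'a measure"
    and s :: "'a multiset \<Rightarrow> real" and N N' :: nat
  assumes "compact I"
    and "sets M = sets (restrict_space borel I)" and "space M = I"
    and "finite_measure M"
    and "N \<ge> 2" and "1 \<le> N'" and "N' \<le> N"
    and "\<And>G. G \<in> calG I N' N \<Longrightarrow> s G \<ge> 0"
  shows "U_hat M I s N' N = U_all M I s N' N \<and>
         U_all M I s N' N = (\<Inter>n\<in>{N'..N}. U_n M I s n)"
proof
  note nN = \<open>1 \<le> N'\<close> \<open>N' \<le> N\<close>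
  show A: "U_all M I s N' N = (\<Inter>n\<in>{N'..N}. U_n M I s n)"
  proof
    show "U_all M I s N' N \<subseteq> (\<Inter>n\<in>{N'..N}. U_n M I s n)"
    proof (intro subsetI InterI, clarsimp)
      fix u n assume u: "u \<in> U_all M I s N' N" and n: "N' \<le> n" "n \<le> N"
      show "u \<in> U_n M I s n" unfolding U_n_def
      proof (safe)
        show "integrable M u" using u by (simp add: U_all_def)
        fix i assume i: "\<forall>k<n. i k \<in> I"
        let ?G = "image_mset i (mset_set {..<n})"
        have "?G \<in> calG I N' N" unfolding calG_def Gn_def using n set_enum[OF i] by auto
        then show "s ?G \<le> (\<Sum>k<n. u (i k))" using u by (simp add: U_all_def sum_enum)
      qed
    qed
  next
    show "(\<Inter>n\<in>{N'..N}. U_n M I s n) \<subseteq> U_all M I s N' N"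
    proof
      fix u assume u: "u \<in> (\<Inter>n\<in>{N'..N}. U_n M I s n)"
      show "u \<in> U_all M I s N' N" unfolding U_all_def
      proof (safe)
        show "integrable M u" using u nN by (auto simp: U_n_def)
        fix G assume "G \<in> calG I N' N"
        then obtain n where n: "n \<in> {N'..N}" and G: "size G = n" "set_mset G \<subseteq> I"
          by (auto simp: calG_def Gn_def)
        obtain i where i: "image_mset i (mset_set {..<size G}) = G" "\<forall>k<size G. i k \<in># G"
          using enum_mset by blast
        have "u \<in> U_n M I s n" using u n by auto
        have iI: "\<forall>k<n. i k \<in> I"
        proof (intro allI impI)
          fix k :: nat assume "k < n"
          then have "i k \<in># G" using i(2) G(1) by simp
          then show "i k \<in> I" using G(2) by blast
        qed
        then have "s (image_mset i (mset_set {..<n})) \<le> (\<Sum>k<n. u (i k))"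
          using \<open>u \<in> U_n M I s n\<close> unfolding U_n_def by blast
        then show "s G \<le> (\<Sum>x\<in>#G. u x)" using i G by (simp add: sum_enum)
      qed
    qed
  qed
  show "U_hat M I s N' N = U_all M I s N' N"
  proof
    show "U_hat M I s N' N \<subseteq> U_all M I s N' N"
    proof
      fix u assume u: "u \<in> U_hat M I s N' N"
      show "u \<in> U_all M I s N' N" unfolding U_all_def
      proof (safe)
        show "integrable M u" using u by (simp add: U_hat_def)
        fix G assume "G \<in> calG I N' N"
        then obtain n where n: "n \<in> {N'..N}" and G: "size G = n" "set_mset G \<subseteq> I"
          by (auto simp: calG_def Gn_def)
        define K where "K = fact N div n"
        have n1: "1 \<le> n" "n \<le> N" using n nN by auto
        have Kpos: "K > 0" and Kr: "real K = real (fact (N - 1)) * (real N / real n)"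
          using real_K[OF n1] by (auto simp: K_def)
        define Mm where "Mm = repeat_mset K G"
        have d: "n dvd fact N" using n1 by (simp add: dvd_fact)
        have szM: "size Mm = fact N" unfolding Mm_def K_def using G d by simp
        have setM: "set_mset Mm = set_mset G" unfolding Mm_def by (rule set_repeat[OF Kpos])
        obtain i where i: "image_mset i (mset_set {..<size Mm}) = Mm" "\<forall>k<size Mm. i k \<in># Mm"
          using enum_mset by blast
        have iI: "\<forall>k<fact N. i k \<in> I"
        proof (intro allI impI)
          fix k :: nat assume "k < fact N"
          then have "i k \<in># Mm" using i(2) szM by simp
          then show "i k \<in> I" using setM G(2) by blast
        qed
        have cM: "\<forall>x. K dvd count Mm x" unfolding Mm_def by simp
        have MK: "Mm \<in> Kn I N n" unfolding Kn_def using szM setM G(2) cM K_def by simp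
        have P: "Pn N n Mm = G" unfolding Mm_def K_def by (rule Pn_repeat) (use Kpos K_def in simp)
        have fin: "finite ((\<lambda>n. (real N / real n) * s_hat_n I s N n Mm) ` {N'..N})" by simp
        have "(real N / real n) * s G \<le> s_hat I s N' N Mm"
          unfolding s_hat_def
          by (rule Max_ge[OF fin]) (use n MK P in \<open>auto simp: s_hat_n_def intro!: image_eqI[of _ _ n]\<close>)
        then have "real (fact (N - 1)) * ((real N / real n) * s G) \<le> real (fact (N - 1)) * S_fun I s N' N i"
          unfolding S_fun_def using i szM by (intro mult_left_mono) auto
        also have "\<dots> \<le> (\<Sum>k<fact N. u (i k))" using u iI by (simp add: U_hat_def)
        also have "\<dots> = (\<Sum>x\<in>#Mm. u x)" using i szM by (simp add: sum_enum)
        also have "\<dots> = real K * (\<Sum>x\<in>#G. u x)" unfolding Mm_def by (rule sum_repeat)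
        finally have "real K * s G \<le> real K * (\<Sum>x\<in>#G. u x)" using Kr by (simp add: mult.assoc)
        then show "s G \<le> (\<Sum>x\<in>#G. u x)" using Kpos by simp
      qed
    qed
  next
    show "U_all M I s N' N \<subseteq> U_hat M I s N' N"
    proof
      fix u assume u: "u \<in> U_all M I s N' N"
      have nonneg: "u x \<ge> 0" if x: "x \<in> I" for x
      proof -
        have "replicate_mset N x \<in> calG I N' N" unfolding calG_def Gn_def using x nN by auto
        then have "s (replicate_mset N x) \<le> (\<Sum>y\<in>#replicate_mset N x. u y)"
          and "s (replicate_mset N x) \<ge> 0" using u assms(8) by (auto simp: U_all_def)
        then have "0 \<le> real N * u x" by (simp add: sum_mset_replicate_mset)
        then show ?thesis using \<open>N \<ge> 2\<close> by (simp add: zero_le_mult_iff)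
      qed
      show "u \<in> U_hat M I s N' N" unfolding U_hat_def
      proof (safe)
        show "integrable M u" using u by (simp add: U_all_def)
        fix i :: "nat \<Rightarrow> 'a" assume iI: "\<forall>k<fact N. i k \<in> I"
        define Mm where "Mm = image_mset i (mset_set {..<fact N})"
        have sumM: "(\<Sum>k<fact N. u (i k)) = (\<Sum>x\<in>#Mm. u x)" unfolding Mm_def by (rule sum_enum)
        have setM: "set_mset Mm \<subseteq> I" unfolding Mm_def using set_enum[of "fact N" i I] iI by blast
        have s0: "(\<Sum>x\<in>#Mm. u x) \<ge> 0" using setM nonneg by (intro sum_mset_nonneg_real) auto
        have fin: "finite ((\<lambda>n. (real N / real n) * s_hat_n I s N n Mm) ` {N'..N})" by simp
        have ne: "(\<lambda>n. (real N / real n) * s_hat_n I s N n Mm) ` {N'..N} \<noteq> {}" using nN by auto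
        obtain n where n: "n \<in> {N'..N}" and
          smax: "s_hat I s N' N Mm = (real N / real n) * s_hat_n I s N n Mm"
          using Max_in[OF fin ne] unfolding s_hat_def by auto
        have n1: "1 \<le> n" "n \<le> N" using n nN by auto
        define K where "K = fact N div n"
        have Kpos: "K > 0" and Kr: "real K = real (fact (N - 1)) * (real N / real n)"
          using real_K[OF n1] by (auto simp: K_def)
        have SF: "S_fun I s N' N i = s_hat I s N' N Mm" unfolding S_fun_def Mm_def ..
        show "real (fact (N - 1)) * S_fun I s N' N i \<le> (\<Sum>k<fact N. u (i k))"
        proof (cases "Mm \<in> Kn I N n")
          case False
          then have "s_hat_n I s N n Mm = 0" by (simp add: s_hat_n_def)
          then have "S_fun I s N' N i = 0" using smax SF by simp
          then show ?thesis using s0 sumM by simp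
        next
          case True
          then have dv: "\<forall>x. K dvd count Mm x" and szM: "size Mm = fact N" by (auto simp: Kn_def K_def)
          obtain G where G: "repeat_mset K G = Mm" using repeat_exists[OF Kpos dv] by blast
          have P: "Pn N n Mm = G" using Pn_repeat[of N n G] Kpos G by (simp add: K_def)
          have "K * n = fact N" unfolding K_def using n1 by (simp add: dvd_fact)
          then have "K * size G = K * n" using szM G by auto
          then have "size G = n" using Kpos by simp
          moreover have "set_mset G \<subseteq> I" using setM by (simp add: G[symmetric] set_repeat[OF Kpos])
          ultimately have "G \<in> calG I N' N" using n by (auto simp: calG_def Gn_def)
          then have sG: "s G \<le> (\<Sum>x\<in>#G. u x)" using u by (simp add: U_all_def)
          have "real (fact (N - 1)) * S_fun I s N' N i = real K * s G"
            using smax True P Kr SF by (simp add: s_hat_n_def)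
          also have "\<dots> \<le> real K * (\<Sum>x\<in>#G. u x)" using sG by (intro mult_left_mono) auto
          also have "\<dots> = (\<Sum>x\<in>#Mm. u x)" using G sum_repeat[of u K G] by simp
          finally show ?thesis using sumM by simp
        qed
      qed
    qed
  qed
qed

end
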